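(* There exist absolute constants $0<c<C$ such that for every odd $n\ge3$ and every $\alpha>0$, the function $hs_\alpha(x)=\min\big(\alpha,\frac{2\alpha}{n}\sum_{i=1}^nx_i\big)$ on $\{0,1\}^n$ satisfies $$c\,\frac{\alpha^2}{n}\le\|hs_\alpha\|_2^2-\widehat{hs_\alpha}(\emptyset)^2-\widehat{hs_\alpha}([n])^2\le C\,\frac{\alpha^2}{n}.$$
   Context: Fourier analysis: for $S\subseteq[n]$ let $\chi_S(x)=(-1)^{\sum_{i\in S}x_i}$ and $\hat f(S)=\mathbb E_{x\sim U(\{0,1\}^n)}[f(x)\chi_S(x)]$; $\|f\|_2^2=\mathbb E_x[f(x)^2]=\sum_S\hat f(S)^2$. *)

theory Defs
  imports Complex_Main "HOL-Library.FuncSet"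
begin

definition cube :: "nat \<Rightarrow> (nat \<Rightarrow> nat) set" where
  "cube n = {..<n} \<rightarrow>\<^sub>E {0, 1}"

definition chi :: "nat set \<Rightarrow> (nat \<Rightarrow> nat) \<Rightarrow> real" where
  "chi S x = (-1) ^ (\<Sum>i\<in>S. x i)"

definition expect :: "nat \<Rightarrow> ((nat \<Rightarrow> nat) \<Rightarrow> real) \<Rightarrow> real" where
  "expect n f = (\<Sum>x\<in>cube n. f x) / 2 ^ n"

definition fourier_coeff :: "nat \<Rightarrow> ((nat \<Rightarrow> nat) \<Rightarrow> real) \<Rightarrow> nat set \<Rightarrow> real" where
  "fourier_coeff n f S = expect n (\<lambda>x. f x * chi S x)"

definition norm2_sq :: "nat \<Rightarrow> ((nat \<Rightarrow> nat) \<Rightarrow> real) \<Rightarrow> real" where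
  "norm2_sq n f = expect n (\<lambda>x. (f x)^2)"

definition hs :: "nat \<Rightarrow> real \<Rightarrow> (nat \<Rightarrow> nat) \<Rightarrow> real" where
  "hs n \<alpha> x = min \<alpha> (2 * \<alpha> / real n * real (\<Sum>i<n. x i))"

end

theory Submission imports Defs begin

definition sg :: "nat \<Rightarrow> real" where "sg v = (-1)^v"
definition Zf :: "nat \<Rightarrow> (nat \<Rightarrow> nat) \<Rightarrow> real" where "Zf n x = (\<Sum>i<n. sg (x i))"

lemma cube_finite: "finite (cube n)"
  unfolding cube_def by (auto intro: finite_PiE)

lemma cube_val: "x \<in> cube n \<Longrightarrow> i < n \<Longrightarrow> x i = 0 \<or> x i = 1"
  unfolding cube_def by auto

lemma sum_cube_prod: "(\<Sum>x\<in>cube n. \<Prod>l<n. f l (x l)) = (\<Prod>l<n. (f l 0 + f l 1 :: real))"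
proof -
  have "(\<Prod>l<n. (f l 0 + f l 1 :: real)) = (\<Prod>l<n. \<Sum>v\<in>{0,1::nat}. f l v)" by simp
  also have "\<dots> = (\<Sum>x\<in>cube n. \<Prod>l<n. f l (x l))"
    unfolding cube_def by (rule prod_sum_PiE) auto
  finally show ?thesis by simp
qed

lemma expect_prod: "expect n (\<lambda>x. \<Prod>l<n. f l (x l)) = (\<Prod>l<n. (f l 0 + f l 1) / 2)"
  unfolding expect_def sum_cube_prod by (simp add: prod_dividef)

lemma expect_add: "expect n (\<lambda>x. u x + v x) = expect n u + expect n v"
  unfolding expect_def by (simp add: sum.distrib add_divide_distrib)
lemma expect_diff: "expect n (\<lambda>x. u x - v x) = expect n u - expect n v"
  unfolding expect_def by (simp add: sum_subtractf diff_divide_distrib)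
lemma expect_scale: "expect n (\<lambda>x. c * u x) = c * expect n u"
  unfolding expect_def by (simp add: sum_distrib_left)
lemma expect_const: "expect n (\<lambda>x. c) = c"
proof -
  have "card (cube n) = 2^n" unfolding cube_def by (simp add: card_PiE numeral_2_eq_2)
  thus ?thesis unfolding expect_def by simp
qed
lemma expect_sum: "expect n (\<lambda>x. \<Sum>i\<in>I. u i x) = (\<Sum>i\<in>I. expect n (u i))"
  unfolding expect_def by (subst sum.swap) (simp add: sum_divide_distrib)
lemma expect_cong: "(\<And>x. x \<in> cube n \<Longrightarrow> u x = v x) \<Longrightarrow> expect n u = expect n v"
  unfolding expect_def by (simp cong: sum.cong)
lemma expect_mono: "(\<And>x. x \<in> cube n \<Longrightarrow> u x \<le> v x) \<Longrightarrow> expect n u \<le> expect n v"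
  unfolding expect_def by (intro divide_right_mono sum_mono) auto
lemma expect_nonneg: "(\<And>x. x \<in> cube n \<Longrightarrow> 0 \<le> u x) \<Longrightarrow> 0 \<le> expect n u"
  unfolding expect_def by (intro divide_nonneg_nonneg sum_nonneg) auto

lemma sg_sq: "sg v * sg v = 1" unfolding sg_def by (simp add: power_mult_distrib[symmetric] flip: power_add)
  
lemma E_sg: assumes "i < n" shows "expect n (\<lambda>x. sg (x i)) = 0"
proof -
  have "expect n (\<lambda>x. sg (x i)) = expect n (\<lambda>x. \<Prod>l<n. (if l = i then sg (x l) else 1))"
    using assms by (simp add: prod.delta)
  also have "\<dots> = (\<Prod>l<n. ((if l = i then sg 0 else 1) + (if l = i then sg 1 else 1)) / 2)"
    by (rule expect_prod)
  also have "\<dots> = 0" using assms by (intro prod_zero) (auto simp: sg_def)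
  finally show ?thesis .
qed

lemma E_sg2: assumes "i < n" "j < n" shows "expect n (\<lambda>x. sg (x i) * sg (x j)) = (if i = j then 1 else 0)"
proof -
  have "expect n (\<lambda>x. sg (x i) * sg (x j)) = expect n (\<lambda>x. \<Prod>l<n. (if l = i then sg (x l) else 1) * (if l = j then sg (x l) else 1))"
    using assms by (simp add: prod.distrib prod.delta)
  also have "\<dots> = (\<Prod>l<n. ((if l = i then sg 0 else 1) * (if l = j then sg 0 else 1) + (if l = i then sg 1 else 1) * (if l = j then sg 1 else 1)) / 2)"
    by (rule expect_prod)
  also have "\<dots> = (if i = j then 1 else 0)"
  proof (cases "i = j")
    case True thus ?thesis by (simp, intro prod.neutral) (auto simp: sg_def)
  next
    case False thus ?thesis using assms
      apply (simp only: if_not_P[OF False] if_False)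
      by (rule prod_zero) (auto simp: sg_def intro!: bexI[of _ i])
  qed
  finally show ?thesis .
qed

lemma E_Z: "expect n (Zf n) = 0"
  unfolding Zf_def by (simp add: expect_sum E_sg)

lemma E_Z2: "expect n (\<lambda>x. Zf n x ^ 2) = real n"
proof -
  have "expect n (\<lambda>x. Zf n x ^ 2) = expect n (\<lambda>x. \<Sum>i<n. \<Sum>j<n. sg (x i) * sg (x j))"
    unfolding Zf_def power2_eq_square sum_product by simp
  also have "\<dots> = (\<Sum>i<n. \<Sum>j<n. (if i = j then 1 else 0))"
    by (simp add: expect_sum E_sg2)
  finally show ?thesis by simp
qed

lemma chi_prod: "chi {..<n} x = (\<Prod>l<n. sg (x l))"
  unfolding chi_def sg_def by (simp add: power_sum)

lemma E_chi: assumes "n \<ge> 1" shows "expect n (chi {..<n}) = 0"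
proof -
  have "expect n (chi {..<n}) = (\<Prod>l<n. (sg 0 + sg 1) / 2)"
    unfolding chi_prod by (rule expect_prod)
  also have "\<dots> = 0" using assms by (simp add: sg_def)
  finally show ?thesis .
qed

lemma chi_sq: "chi S x * chi S x = 1"
  unfolding chi_def by (simp add: power_mult_distrib[symmetric] flip: power_add)

lemma E_chiZ: assumes "n \<ge> 2" shows "expect n (\<lambda>x. chi {..<n} x * Zf n x) = 0"
proof -
  have "expect n (\<lambda>x. chi {..<n} x * Zf n x) = (\<Sum>i<n. expect n (\<lambda>x. \<Prod>l<n. sg (x l) * (if l = i then sg (x l) else 1)))"
    unfolding Zf_def chi_prod sum_distrib_left expect_sum by (simp add: prod.distrib prod.delta)
  also have "\<dots> = (\<Sum>i<n. \<Prod>l<n. (sg 0 * (if l = i then sg 0 else 1) + sg 1 * (if l = i then sg 1 else 1)) / 2)"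
    by (rule sum.cong[OF refl], rule expect_prod)
  also have "\<dots> = 0"
  proof (intro sum.neutral ballI prod_zero)
    fix i assume "i \<in> {..<n}"
    show "\<exists>l\<in>{..<n}. (sg 0 * (if l = i then sg 0 else 1) + sg 1 * (if l = i then sg 1 else 1)) / 2 = 0"
      using assms by (intro bexI[of _ "if i = 0 then 1 else 0"]) (auto simp: sg_def)
  qed simp
  finally show ?thesis .
qed

definition comp :: "nat \<Rightarrow> (nat \<Rightarrow> nat) \<Rightarrow> (nat \<Rightarrow> nat)" where
  "comp n x = (\<lambda>i. if i < n then 1 - x i else undefined)"

lemma comp_cube: assumes "x \<in> cube n" shows "comp n x \<in> cube n"
proof -
  have "\<forall>i\<in>{..<n}. comp n x i \<in> {0, 1}"
  proof
    fix i assume "i \<in> {..<n}"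
    then have "i < n" by simp
    then have "x i = 0 \<or> x i = 1" using cube_val assms by blast
    thus "comp n x i \<in> {0, 1}" using \<open>i < n\<close> unfolding comp_def by auto
  qed
  moreover have "comp n x \<in> extensional {..<n}" unfolding comp_def extensional_def by simp
  ultimately show ?thesis unfolding cube_def PiE_iff by blast
qed
lemma comp_comp: assumes "x \<in> cube n" shows "comp n (comp n x) = x"
proof
  fix i show "comp n (comp n x) i = x i"
  proof (cases "i < n")
    case True then have "x i = 0 \<or> x i = 1" using cube_val assms by auto
    thus ?thesis using True by (auto simp: comp_def)
  next
    case False thus ?thesis using assms by (auto simp: comp_def cube_def PiE_def extensional_def)
  qed
qed

lemma expect_comp: "expect n u = expect n (\<lambda>x. u (comp n x))"
proof -
  have "(\<Sum>x\<in>cube n. u x) = (\<Sum>x\<in>cube n. u (comp n x))"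
    by (rule sum.reindex_bij_witness[where i="comp n" and j="comp n"])
       (simp_all add: comp_cube comp_comp)
  thus ?thesis unfolding expect_def by simp
qed

lemma Z_comp: "x \<in> cube n \<Longrightarrow> Zf n (comp n x) = - Zf n x"
  unfolding Zf_def sum_negf[symmetric]
proof (rule sum.cong)
  fix i assume "x \<in> cube n" "i \<in> {..<n}"
  then have "x i = 0 \<or> x i = 1" using cube_val by auto
  thus "sg (comp n x i) = - sg (x i)" using \<open>i \<in> _\<close> by (auto simp: comp_def sg_def)
qed simp

lemma E_PZ: "expect n (\<lambda>x. max 0 (Zf n x) * Zf n x) = real n / 2"
proof -
  have "expect n (\<lambda>x. max 0 (Zf n x) * Zf n x) = expect n (\<lambda>x. max 0 (- Zf n x) * (- Zf n x))"
    by (subst expect_comp) (rule expect_cong, simp add: Z_comp)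
  moreover have "expect n (\<lambda>x. max 0 (Zf n x) * Zf n x) + expect n (\<lambda>x. max 0 (- Zf n x) * (- Zf n x)) = real n"
    unfolding expect_add[symmetric] E_Z2[symmetric]
    by (rule expect_cong) (auto simp: max_def power2_eq_square)
  ultimately show ?thesis by simp
qed

lemma hs_cube: assumes "x \<in> cube n" "n > 0" "\<alpha> > 0"
  shows "hs n \<alpha> x = \<alpha> - \<alpha> / real n * max 0 (Zf n x)"
proof -
  have "real (\<Sum>i<n. x i) = (\<Sum>i<n. (1 - sg (x i)) / 2)"
    unfolding of_nat_sum
  proof (rule sum.cong)
    fix i assume "i \<in> {..<n}"
    then have "x i = 0 \<or> x i = 1" using cube_val assms by auto
    thus "real (x i) = (1 - sg (x i)) / 2" by (auto simp: sg_def)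
  qed simp
  also have "\<dots> = (real n - Zf n x) / 2"
    unfolding Zf_def by (simp add: sum_divide_distrib[symmetric] sum_subtractf)
  finally have e: "real (\<Sum>i<n. x i) = (real n - Zf n x) / 2" .
  define t where "t = \<alpha> / real n"
  have t: "t > 0" using assms by (simp add: t_def)
  have "2 * \<alpha> / real n * real (\<Sum>i<n. x i) = \<alpha> - t * Zf n x"
    unfolding e t_def using assms by (simp add: field_simps)
  then have h: "hs n \<alpha> x = min \<alpha> (\<alpha> - t * Zf n x)" unfolding hs_def by simp
  have "min \<alpha> (\<alpha> - t * Zf n x) = \<alpha> - t * max 0 (Zf n x)"
  proof (cases "Zf n x \<ge> 0")
    case True then have "t * Zf n x \<ge> 0" using t by simp
    thus ?thesis using True by (simp add: min_def max_def)
  next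
    case False then have "t * Zf n x < 0" using t by (simp add: mult_pos_neg)
    thus ?thesis using False by (simp add: min_def max_def)
  qed
  thus ?thesis using h t_def by simp
qed


lemma bounds:
  fixes n :: nat and \<alpha> :: real
  assumes n3: "n \<ge> 3" and al: "\<alpha> > 0"
  shows "1/4 * \<alpha>^2 / real n \<le> norm2_sq n (hs n \<alpha>) - (fourier_coeff n (hs n \<alpha>) {})^2
          - (fourier_coeff n (hs n \<alpha>) {..<n})^2"
    and "norm2_sq n (hs n \<alpha>) - (fourier_coeff n (hs n \<alpha>) {})^2
          - (fourier_coeff n (hs n \<alpha>) {..<n})^2 \<le> 1 * \<alpha>^2 / real n"
proof -
  have n0: "n > 0" using n3 by simp
  define f where "f = hs n \<alpha>"
  define t where "t = \<alpha> / real n"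
  define \<chi> where "\<chi> = chi {..<n}"
  define a where "a = fourier_coeff n f {}"
  define b where "b = fourier_coeff n f {..<n}"
  define N where "N = norm2_sq n f"
  have a_eq: "a = expect n f" unfolding a_def fourier_coeff_def chi_def by simp
  have b_eq: "b = expect n (\<lambda>x. f x * \<chi> x)" unfolding b_def fourier_coeff_def \<chi>_def by simp
  have N_eq: "N = expect n (\<lambda>x. f x ^ 2)" unfolding N_def norm2_sq_def by simp
  have fc: "\<And>x. x \<in> cube n \<Longrightarrow> f x = \<alpha> - t * max 0 (Zf n x)"
    unfolding f_def t_def using hs_cube n0 al by blast
  have tn: "t * t * real n = \<alpha>^2 / real n" unfolding t_def using n0 by (simp add: power2_eq_square)
  have "expect n (\<lambda>x. (f x - \<alpha>)^2) = expect n (\<lambda>x. f x^2 - (2*\<alpha>) * f x + \<alpha>^2)"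
    by (rule expect_cong) (simp add: power2_eq_square algebra_simps)
  also have "\<dots> = N - 2*\<alpha>*a + \<alpha>^2"
    unfolding expect_add expect_diff expect_scale expect_const N_eq a_eq by simp
  finally have u1: "expect n (\<lambda>x. (f x - \<alpha>)^2) = N - 2*\<alpha>*a + \<alpha>^2" .
  have "expect n (\<lambda>x. (f x - \<alpha>)^2) = expect n (\<lambda>x. (t*t) * (max 0 (Zf n x))^2)"
    by (rule expect_cong) (simp add: fc power2_eq_square)
  also have "\<dots> = (t*t) * expect n (\<lambda>x. (max 0 (Zf n x))^2)" by (rule expect_scale)
  also have "\<dots> \<le> (t*t) * expect n (\<lambda>x. (Zf n x)^2)"
    by (intro mult_left_mono expect_mono) (auto simp: max_def power2_eq_square)
  also have "\<dots> = \<alpha>^2 / real n" using tn E_Z2 by simp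
  finally have u2: "N - 2*\<alpha>*a + \<alpha>^2 \<le> \<alpha>^2 / real n" using u1 by simp
  have "0 \<le> (a - \<alpha>)^2" "0 \<le> b^2" by simp_all
  moreover have "(a - \<alpha>)^2 = a^2 - 2*\<alpha>*a + \<alpha>^2" by (simp add: power2_eq_square algebra_simps)
  ultimately have "N - a^2 - b^2 \<le> N - 2*\<alpha>*a + \<alpha>^2" by linarith
  with u2 have up: "N - a^2 - b^2 \<le> 1 * \<alpha>^2 / real n" by simp
  define h where "h x = f x - a - b * \<chi> x" for x
  have "expect n (\<lambda>x. h x ^ 2) = expect n (\<lambda>x. f x ^ 2 - (2*a) * f x - (2*b) * (f x * \<chi> x) + (2*a*b) * \<chi> x + (a^2 + b^2))"
  proof (rule expect_cong)
    fix x
    have "\<chi> x * \<chi> x = 1" unfolding \<chi>_def by (rule chi_sq)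
    moreover have "h x ^ 2 = f x ^ 2 - (2*a) * f x - (2*b) * (f x * \<chi> x) + (2*a*b) * \<chi> x + (a^2 + b^2 * (\<chi> x * \<chi> x))"
      unfolding h_def power2_eq_square by algebra
    ultimately show "h x ^ 2 = f x ^ 2 - (2*a) * f x - (2*b) * (f x * \<chi> x) + (2*a*b) * \<chi> x + (a^2 + b^2)"
      by simp
  qed
  also have "\<dots> = N - a^2 - b^2"
    unfolding expect_add expect_diff expect_scale expect_const N_eq[symmetric] a_eq[symmetric] b_eq[symmetric]
    using E_chi[of n] n0 unfolding \<chi>_def[symmetric] by (simp add: power2_eq_square)
  finally have Eh2: "expect n (\<lambda>x. h x ^ 2) = N - a^2 - b^2" .
  have "expect n (\<lambda>x. f x * Zf n x) = expect n (\<lambda>x. \<alpha> * Zf n x - t * (max 0 (Zf n x) * Zf n x))"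
    by (rule expect_cong) (simp add: fc algebra_simps)
  also have "\<dots> = - t * (real n / 2)"
    unfolding expect_diff expect_scale E_Z E_PZ by simp
  also have "\<dots> = - \<alpha> / 2" unfolding t_def using n0 by simp
  finally have EfZ: "expect n (\<lambda>x. f x * Zf n x) = - \<alpha> / 2" .
  have "expect n (\<lambda>x. h x * Zf n x) = expect n (\<lambda>x. f x * Zf n x - a * Zf n x - b * (\<chi> x * Zf n x))"
    by (rule expect_cong) (simp add: h_def algebra_simps)
  also have "\<dots> = - \<alpha> / 2"
    unfolding expect_diff expect_scale E_Z EfZ \<chi>_def using E_chiZ[of n] n3 by simp
  finally have EhZ: "expect n (\<lambda>x. h x * Zf n x) = - \<alpha> / 2" .
  have "0 \<le> expect n (\<lambda>x. (h x + t/2 * Zf n x)^2)" by (rule expect_nonneg) simp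
  also have "expect n (\<lambda>x. (h x + t/2 * Zf n x)^2) = expect n (\<lambda>x. h x ^ 2 + t * (h x * Zf n x) + (t*t/4) * (Zf n x ^ 2))"
    by (rule expect_cong) (simp add: power2_eq_square algebra_simps)
  also have "\<dots> = (N - a^2 - b^2) + t * (- \<alpha> / 2) + (t*t/4) * real n"
    unfolding expect_add expect_scale Eh2 EhZ E_Z2 by simp
  also have "\<dots> = (N - a^2 - b^2) - 1/4 * \<alpha>^2 / real n"
    using tn unfolding t_def by (simp add: power2_eq_square field_simps)
  finally have lo: "1/4 * \<alpha>^2 / real n \<le> N - a^2 - b^2" by simp
  show "1/4 * \<alpha>^2 / real n \<le> norm2_sq n (hs n \<alpha>) - (fourier_coeff n (hs n \<alpha>) {})^2
          - (fourier_coeff n (hs n \<alpha>) {..<n})^2" using lo unfolding N_def a_def b_def f_def .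
  show "norm2_sq n (hs n \<alpha>) - (fourier_coeff n (hs n \<alpha>) {})^2
          - (fourier_coeff n (hs n \<alpha>) {..<n})^2 \<le> 1 * \<alpha>^2 / real n" using up unfolding N_def a_def b_def f_def .
qed

theorem mainTheorem20:
  shows "\<exists>c C :: real. 0 < c \<and> c < C \<and>
    (\<forall>(n::nat) (\<alpha>::real). odd n \<and> n \<ge> 3 \<and> \<alpha> > 0 \<longrightarrow>
      c * \<alpha>^2 / real n \<le>
        norm2_sq n (hs n \<alpha>) - (fourier_coeff n (hs n \<alpha>) {})^2
          - (fourier_coeff n (hs n \<alpha>) {..<n})^2
      \<and> norm2_sq n (hs n \<alpha>) - (fourier_coeff n (hs n \<alpha>) {})^2
          - (fourier_coeff n (hs n \<alpha>) {..<n})^2 \<le> C * \<alpha>^2 / real n)"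
  apply (rule exI[of _ "1/4"], rule exI[of _ 1])
  using bounds by auto

end
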